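(* There is an absolute constant $C$ such that, in the construction below, $\hat{\mathcal D}$ is $(C\log n)$-Lipschitz with respect to $(X,d)$: for every $m\ge1$ and every sequence $x_1,\dots,x_m\in X$ there are root-to-level-$K$ paths $\gamma_1,\dots,\gamma_m$ in $\mathcal D$, with $\gamma_i$ ending at $(x_i,K)$, such that $\sum_{i=1}^{m-1}\mathrm{dist}_{\hat{\mathcal D}}(\gamma_i,\gamma_{i+1})\le C\log(n)\sum_{i=1}^{m-1}d(x_i,x_{i+1})$.
   Context: Construction. Let $(X,d)$ be a metric space with $n=|X|\ge2$ and $\mathrm{diam}(X)=1$. For $S\subseteq X$, $r\ge0$: $B_X(S,r):=\{x\in X:\exists s\in S,\ d(x,s)\le r\}$ and $B_X(x,r):=B_X(\{x\},r)$. Let $\varepsilon_0:=\min\{d(x,y):x\ne y\}$, $\tau:=12$, $K:=1+\lceil\log_\tau(1/\varepsilon_0)\rceil$. For $\eta>0$ the greedy $\eta$-net is built as: $N_0=\emptyset$; for $j\ge1$, $S_j:=X\setminus B_X(N_{j-1},\eta)$; if $S_j=\emptyset$ output $N_{j-1}$; else pick $x_j\in S_j$ maximizing $|B_X(x,\eta/3)|$ and set $N_j=N_{j-1}\cup\{x_j\}$. For $k=0,\dots,K$ let $U_k$ be the greedy $\tau^{-k}$-net. For $k<K$, $A_k$ is the set of pairs $(u,u')\in U_k\times U_{k+1}$ with (i) $d(u,u')\le4\tau^{-k}$ and (ii) $|B_X(u,\tau^{-k}/3)|\ge\max\{|B_X(w,\tau^{-k}/3)|:w\in B_X(u',6\tau^{-(k+1)})\}$.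 The directed graph $\mathcal D$ has vertex set $\{(u,k):u\in U_k,\ 0\le k\le K\}$, arcs $((u,k),(u',k+1))$ for $(u,u')\in A_k$, root $(u,0)$ with $U_0=\{u\}$, with weights $\omega_{(u,k)(u',k+1)}:=10\tau^{-k}$. For two root-to-level-$K$ paths $\gamma_1\ne\gamma_2$, let $a$ be the first vertex at which they diverge, with arcs $av_1\in\gamma_1$, $av_2\in\gamma_2$, $v_1\ne v_2$; $\mathrm{dist}_{\hat{\mathcal D}}(\gamma_1,\gamma_2):=\max(\omega_{av_1},\omega_{av_2})$, and $\mathrm{dist}_{\hat{\mathcal D}}(\gamma,\gamma):=0$. *)

theory Defs
  imports Complex_Main
begin

definition fin_metric :: "'a set \<Rightarrow> ('a \<Rightarrow> 'a \<Rightarrow> real) \<Rightarrow> bool" where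
  "fin_metric X d \<longleftrightarrow> finite X \<and>
     (\<forall>x\<in>X. d x x = 0) \<and>
     (\<forall>x\<in>X. \<forall>y\<in>X. x \<noteq> y \<longrightarrow> d x y > 0) \<and>
     (\<forall>x\<in>X. \<forall>y\<in>X. d x y = d y x) \<and>
     (\<forall>x\<in>X. \<forall>y\<in>X. \<forall>z\<in>X. d x z \<le> d x y + d y z)"

definition diam :: "'a set \<Rightarrow> ('a \<Rightarrow> 'a \<Rightarrow> real) \<Rightarrow> real" where
  "diam X d = Max ((\<lambda>(x, y). d x y) ` (X \<times> X))"

definition ballS :: "'a set \<Rightarrow> ('a \<Rightarrow> 'a \<Rightarrow> real) \<Rightarrow> 'a set \<Rightarrow> real \<Rightarrow> 'a set" where
  "ballS X d S r = {x \<in> X. \<exists>s\<in>S. d x s \<le> r}"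

definition ball1 :: "'a set \<Rightarrow> ('a \<Rightarrow> 'a \<Rightarrow> real) \<Rightarrow> 'a \<Rightarrow> real \<Rightarrow> 'a set" where
  "ball1 X d x r = ballS X d {x} r"

definition eps0 :: "'a set \<Rightarrow> ('a \<Rightarrow> 'a \<Rightarrow> real) \<Rightarrow> real" where
  "eps0 X d = Min {d x y | x y. x \<in> X \<and> y \<in> X \<and> x \<noteq> y}"

definition tau :: real where "tau = 12"

definition Klev :: "'a set \<Rightarrow> ('a \<Rightarrow> 'a \<Rightarrow> real) \<Rightarrow> nat" where
  "Klev X d = 1 + nat \<lceil>log tau (1 / eps0 X d)\<rceil>"

text \<open>A run of the greedy eta-net procedure: the list of chosen points x_1, x_2, ...
  (list index j corresponds to step j+1, N_{j} = set (take j xs)). Ties in the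
  maximisation are broken arbitrarily: every admissible run is allowed.\<close>
definition greedy_run :: "'a set \<Rightarrow> ('a \<Rightarrow> 'a \<Rightarrow> real) \<Rightarrow> real \<Rightarrow> 'a list \<Rightarrow> bool" where
  "greedy_run X d eta xs \<longleftrightarrow>
     (\<forall>j < length xs.
        let S = X - ballS X d (set (take j xs)) eta in
        xs ! j \<in> S \<and>
        (\<forall>y\<in>S. card (ball1 X d y (eta / 3)) \<le> card (ball1 X d (xs ! j) (eta / 3))))
     \<and> X - ballS X d (set xs) eta = {}"

definition greedy_net :: "'a set \<Rightarrow> ('a \<Rightarrow> 'a \<Rightarrow> real) \<Rightarrow> real \<Rightarrow> 'a set \<Rightarrow> bool" where
  "greedy_net X d eta N \<longleftrightarrow> (\<exists>xs. greedy_run X d eta xs \<and> N = set xs)"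

definition nets_ok :: "'a set \<Rightarrow> ('a \<Rightarrow> 'a \<Rightarrow> real) \<Rightarrow> (nat \<Rightarrow> 'a set) \<Rightarrow> bool" where
  "nets_ok X d U \<longleftrightarrow> (\<forall>k \<le> Klev X d. greedy_net X d (1 / tau ^ k) (U k))"

definition arcA :: "'a set \<Rightarrow> ('a \<Rightarrow> 'a \<Rightarrow> real) \<Rightarrow> (nat \<Rightarrow> 'a set) \<Rightarrow> nat \<Rightarrow> 'a \<Rightarrow> 'a \<Rightarrow> bool" where
  "arcA X d U k u u' \<longleftrightarrow> u \<in> U k \<and> u' \<in> U (Suc k) \<and>
     d u u' \<le> 4 / tau ^ k \<and>
     (\<forall>w \<in> ball1 X d u' (6 / tau ^ (Suc k)).
        card (ball1 X d w (1 / tau ^ k / 3)) \<le> card (ball1 X d u (1 / tau ^ k / 3)))"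

definition arc_weight :: "nat \<Rightarrow> real" where
  "arc_weight k = 10 / tau ^ k"

text \<open>A root-to-level-K path in D, represented by the list of its points
  (the vertex at position k is (p ! k, k)).\<close>
definition dpath :: "'a set \<Rightarrow> ('a \<Rightarrow> 'a \<Rightarrow> real) \<Rightarrow> (nat \<Rightarrow> 'a set) \<Rightarrow> 'a list \<Rightarrow> bool" where
  "dpath X d U p \<longleftrightarrow> length p = Suc (Klev X d) \<and> p ! 0 \<in> U 0 \<and>
     (\<forall>k < Klev X d. arcA X d U k (p ! k) (p ! Suc k))"

definition dist_hat :: "'a list \<Rightarrow> 'a list \<Rightarrow> real" where
  "dist_hat p q = (if p = q then 0 else
     (let j = (LEAST j. p ! Suc j \<noteq> q ! Suc j) in max (arc_weight j) (arc_weight j)))"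

end

theory Submission
  imports Defs
begin


lemma greedy_cover:
  assumes g: "greedy_run X d eta xs"
  shows "set xs \<subseteq> X" "\<And>w. w \<in> X \<Longrightarrow> \<exists>u\<in>set xs. d w u \<le> eta \<and>
      card (ball1 X d w (eta/3)) \<le> card (ball1 X d u (eta/3))"
proof -
  have step: "\<And>j. j < length xs \<Longrightarrow> xs ! j \<in> X - ballS X d (set (take j xs)) eta \<and>
        (\<forall>y\<in>X - ballS X d (set (take j xs)) eta. card (ball1 X d y (eta / 3)) \<le> card (ball1 X d (xs ! j) (eta / 3)))"
    using g unfolding greedy_run_def Let_def by blast
  show "set xs \<subseteq> X"
  proof
    fix u assume "u \<in> set xs"
    then obtain j where "j < length xs" "u = xs ! j" by (auto simp: in_set_conv_nth)
    thus "u \<in> X" using step by blast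
  qed
  fix w assume w: "w \<in> X"
  have "w \<notin> X - ballS X d (set xs) eta" using g unfolding greedy_run_def by blast
  then obtain s where "s \<in> set xs" "d w s \<le> eta" using w unfolding ballS_def by blast
  then obtain j0 where j0: "j0 < length xs" "d w (xs ! j0) \<le> eta" by (auto simp: in_set_conv_nth)
  define j where "j = (LEAST j. j < length xs \<and> d w (xs ! j) \<le> eta)"
  have jP: "j < length xs \<and> d w (xs ! j) \<le> eta" unfolding j_def by (rule LeastI[of _ j0]) (use j0 in auto)
  have jmin: "\<And>i. i < j \<Longrightarrow> \<not> d w (xs ! i) \<le> eta"
  proof -
    fix i assume "i < j"
    hence "\<not> (i < length xs \<and> d w (xs ! i) \<le> eta)" unfolding j_def by (rule not_less_Least)
    thus "\<not> d w (xs ! i) \<le> eta" using \<open>i < j\<close> jP by auto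
  qed
  have "w \<in> X - ballS X d (set (take j xs)) eta"
  proof -
    have "\<And>s. s \<in> set (take j xs) \<Longrightarrow> \<not> d w s \<le> eta"
    proof -
      fix s assume "s \<in> set (take j xs)"
      then obtain i where "i < length (take j xs)" "s = take j xs ! i" by (auto simp: in_set_conv_nth)
      thus "\<not> d w s \<le> eta" using jmin by auto
    qed
    thus ?thesis using w unfolding ballS_def by blast
  qed
  hence "card (ball1 X d w (eta / 3)) \<le> card (ball1 X d (xs ! j) (eta / 3))" using step jP by blast
  thus "\<exists>u\<in>set xs. d w u \<le> eta \<and> card (ball1 X d w (eta/3)) \<le> card (ball1 X d u (eta/3))"
    using jP by (intro bexI[of _ "xs ! j"]) auto
qed



locale setting =
  fixes X :: "'a set" and d :: "'a \<Rightarrow> 'a \<Rightarrow> real" and U :: "nat \<Rightarrow> 'a set"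
  assumes fm: "fin_metric X d" and cardX: "card X \<ge> 2" and diam1: "diam X d = 1"
    and nets: "nets_ok X d U"
begin

lemma finX: "finite X" using fm by (simp add: fin_metric_def)
lemma d0: "x \<in> X \<Longrightarrow> d x x = 0" using fm by (simp add: fin_metric_def)
lemma dpos: "x \<in> X \<Longrightarrow> y \<in> X \<Longrightarrow> x \<noteq> y \<Longrightarrow> d x y > 0" using fm by (simp add: fin_metric_def)
lemma dsym: "x \<in> X \<Longrightarrow> y \<in> X \<Longrightarrow> d x y = d y x" using fm by (simp add: fin_metric_def)
lemma tri: "x \<in> X \<Longrightarrow> y \<in> X \<Longrightarrow> z \<in> X \<Longrightarrow> d x z \<le> d x y + d y z"
  using fm unfolding fin_metric_def by blast
lemma dnn: "x \<in> X \<Longrightarrow> y \<in> X \<Longrightarrow> d x y \<ge> 0"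
  using tri[of x y x] d0[of x] dsym[of x y] by simp

lemma le_diam: "x \<in> X \<Longrightarrow> y \<in> X \<Longrightarrow> d x y \<le> 1"
proof -
  assume a: "x \<in> X" "y \<in> X"
  have "d x y \<in> (\<lambda>(x, y). d x y) ` (X \<times> X)" using a by force
  moreover have "finite ((\<lambda>(x, y). d x y) ` (X \<times> X))" using finX by simp
  ultimately have "d x y \<le> diam X d" unfolding diam_def by (rule Max_ge[rotated])
  thus ?thesis using diam1 by simp
qed

definition n where "n = card X"
lemma Xne: "X \<noteq> {}" using cardX by auto

definition E where "E = {d x y | x y. x \<in> X \<and> y \<in> X \<and> x \<noteq> y}"
lemma E_fin: "finite E"
proof -
  have "E \<subseteq> (\<lambda>(x, y). d x y) ` (X \<times> X)"
  proof
    fix e assume "e \<in> E"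
    then obtain x y where "e = d x y" "x \<in> X" "y \<in> X" unfolding E_def by blast
    thus "e \<in> (\<lambda>(x, y). d x y) ` (X \<times> X)" by (intro image_eqI[of _ _ "(x,y)"]) auto
  qed
  thus ?thesis using finX finite_subset by blast
qed
lemma E_ne: "E \<noteq> {}"
proof -
  obtain B where "B \<subseteq> X" "card B = 2" using obtain_subset_with_card_n[OF cardX] by metis
  then obtain x y where "x \<in> X" "y \<in> X" "x \<noteq> y" by (metis card_2_iff insertCI subset_iff)
  hence "d x y \<in> E" unfolding E_def by auto
  thus ?thesis by auto
qed
lemma eps0_pos: "eps0 X d > 0"
proof -
  have "Min E \<in> E" using E_fin E_ne by simp
  then obtain x y where "Min E = d x y" "x \<in> X" "y \<in> X" "x \<noteq> y" unfolding E_def by blast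
  thus ?thesis using dpos unfolding eps0_def E_def[symmetric] by simp
qed
lemma eps0_le: "x \<in> X \<Longrightarrow> y \<in> X \<Longrightarrow> x \<noteq> y \<Longrightarrow> eps0 X d \<le> d x y"
  unfolding eps0_def E_def[symmetric] using E_fin by (intro Min_le) (auto simp: E_def)
lemma eps0_le1: "eps0 X d \<le> 1"
proof -
  obtain x y where "x \<in> X" "y \<in> X" "x \<noteq> y" using E_ne unfolding E_def by blast
  thus ?thesis using eps0_le le_diam by fastforce
qed

definition K where "K = Klev X d"

lemma tauK: "12 / eps0 X d \<le> (12::real) ^ K"
proof -
  let ?e = "eps0 X d"
  have e: "?e > 0" "?e \<le> 1" using eps0_pos eps0_le1 by auto
  have l: "log 12 (1 / ?e) \<ge> 0" using e by simp
  have "1 / ?e = 12 powr (log 12 (1/?e))" using e by simp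
  also have "\<dots> \<le> 12 powr (real (nat \<lceil>log 12 (1 / ?e)\<rceil>))"
    by (intro powr_mono) (use l in linarith, simp)
  also have "\<dots> = 12 ^ (nat \<lceil>log 12 (1 / ?e)\<rceil>)" by (simp add: powr_realpow)
  finally have "1/?e \<le> 12 ^ (nat \<lceil>log 12 (1 / ?e)\<rceil>)" .
  hence "12 * (1/?e) \<le> 12 * 12 ^ (nat \<lceil>log 12 (1 / ?e)\<rceil>)" by simp
  thus ?thesis unfolding K_def Klev_def tau_def by simp
qed

end



definition eta :: "nat \<Rightarrow> real" where "eta k = 1 / tau ^ k"
lemma eta_pos: "eta k > 0" by (simp add: eta_def tau_def)
lemma eta_Suc: "eta (Suc k) = eta k / 12" by (simp add: eta_def tau_def)
lemma eta_le1: "eta k \<le> 1" by (simp add: eta_def tau_def)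

context setting begin

definition mu where "mu k v = card (ball1 X d v (eta k / 3))"

lemma ball1_iff: "w \<in> ball1 X d u r \<longleftrightarrow> w \<in> X \<and> d w u \<le> r"
  by (simp add: ball1_def ballS_def)

lemma netU: assumes "k \<le> K"
  shows "U k \<subseteq> X" "\<And>w. w \<in> X \<Longrightarrow> \<exists>u\<in>U k. d w u \<le> eta k \<and> mu k w \<le> mu k u"
proof -
  obtain xs where g: "greedy_run X d (1 / tau ^ k) xs" "U k = set xs"
    using nets assms unfolding nets_ok_def greedy_net_def K_def by blast
  show "U k \<subseteq> X" using greedy_cover(1)[OF g(1)] g(2) by simp
  fix w assume "w \<in> X"
  from greedy_cover(2)[OF g(1) this] g(2)
  show "\<exists>u\<in>U k. d w u \<le> eta k \<and> mu k w \<le> mu k u" by (simp add: mu_def eta_def)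
qed

definition F where "F k z = (SOME u. u \<in> U k \<and> d u z \<le> 9/4 * eta k \<and>
   (\<forall>w\<in>X. d w z \<le> 5/4 * eta k \<longrightarrow> mu k w \<le> mu k u))"

lemma F_prop: assumes "k \<le> K" "z \<in> X"
  shows "F k z \<in> U k \<and> d (F k z) z \<le> 9/4 * eta k \<and>
   (\<forall>w\<in>X. d w z \<le> 5/4 * eta k \<longrightarrow> mu k w \<le> mu k (F k z))"
proof -
  define W where "W = {w \<in> X. d w z \<le> 5/4 * eta k}"
  have Wf: "finite W" using finX unfolding W_def by simp
  have zW: "z \<in> W" using assms d0 eta_pos[of k] unfolding W_def by simp
  define M where "M = Max (mu k ` W)"
  have "M \<in> mu k ` W" unfolding M_def using Wf zW by (intro Max_in) auto
  then obtain ws where ws: "ws \<in> W" "mu k ws = M" by auto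
  have wsX: "ws \<in> X" using ws W_def by simp
  obtain u where u: "u \<in> U k" "d ws u \<le> eta k" "mu k ws \<le> mu k u" using netU(2)[OF assms(1) wsX] by blast
  have uX: "u \<in> X" using netU(1)[OF assms(1)] u by auto
  have "d u z \<le> d u ws + d ws z" using tri uX wsX assms by blast
  also have "\<dots> \<le> eta k + 5/4 * eta k" using u(2) dsym[OF uX wsX] ws W_def by auto
  finally have du: "d u z \<le> 9/4 * eta k" by simp
  have "\<forall>w\<in>X. d w z \<le> 5/4 * eta k \<longrightarrow> mu k w \<le> mu k u"
  proof (intro ballI impI)
    fix w assume "w \<in> X" "d w z \<le> 5/4 * eta k"
    hence "w \<in> W" unfolding W_def by simp
    hence "mu k w \<le> M" unfolding M_def using Wf by (intro Max_ge) auto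
    thus "mu k w \<le> mu k u" using ws u by simp
  qed
  hence "\<exists>u. u \<in> U k \<and> d u z \<le> 9/4 * eta k \<and>
   (\<forall>w\<in>X. d w z \<le> 5/4 * eta k \<longrightarrow> mu k w \<le> mu k u)" using u du by blast
  thus ?thesis unfolding F_def by (rule someI_ex)
qed

lemma FX: "k \<le> K \<Longrightarrow> z \<in> X \<Longrightarrow> F k z \<in> X" using F_prop netU(1) by blast

lemma etaK: "eta K \<le> eps0 X d / 12"
proof -
  have a: "12 / eps0 X d \<le> 12 ^ K" by (rule tauK)
  have "1 / (12::real) ^ K \<le> 1 / (12 / eps0 X d)"
    by (rule divide_left_mono[OF a]) (use eps0_pos in auto)
  thus ?thesis unfolding eta_def tau_def by simp
qed

lemma closeK: "x \<in> X \<Longrightarrow> y \<in> X \<Longrightarrow> d x y \<le> 3 * eta K \<Longrightarrow> x = y"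
  using eps0_le etaK eps0_pos by fastforce

lemma FK: assumes "z \<in> X" shows "F K z = z"
proof -
  have "d (F K z) z \<le> 9/4*eta K" using F_prop[of K z] assms by simp
  hence "d (F K z) z \<le> 3*eta K" using eta_pos[of K] by linarith
  thus ?thesis using closeK FX[of K z] assms by simp
qed

lemma arc: assumes "k < K" "z \<in> X" "z' \<in> X" "x \<in> X" "d x z \<le> eta k / 2" "d x z' \<le> eta (Suc k) / 2"
  shows "arcA X d U k (F k z) (F (Suc k) z')"
proof -
  let ?u = "F k z" and ?v = "F (Suc k) z'"
  have Pu: "?u \<in> U k \<and> d ?u z \<le> 9/4 * eta k \<and>
   (\<forall>w\<in>X. d w z \<le> 5/4 * eta k \<longrightarrow> mu k w \<le> mu k ?u)" using F_prop assms by simp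
  have Pv: "?v \<in> U (Suc k) \<and> d ?v z' \<le> 9/4 * eta (Suc k)" using F_prop assms by simp
  have uX: "?u \<in> X" and vX: "?v \<in> X" using FX assms by auto
  have e: "eta (Suc k) = eta k / 12" by (rule eta_Suc)
  have dz: "d z z' \<le> eta k / 2 + eta (Suc k) / 2"
    using tri[OF assms(2) assms(4) assms(3)] dsym[OF assms(2,4)] assms(5,6) by simp
  have "d ?u ?v \<le> d ?u z + d z ?v" using tri uX vX assms by blast
  also have "d z ?v \<le> d z z' + d z' ?v" using tri vX assms by blast
  finally have "d ?u ?v \<le> 4 * eta k" using Pu Pv dz dsym[OF vX assms(3)] e eta_pos[of k] by simp
  hence c1: "d ?u ?v \<le> 4 / tau ^ k" by (simp add: eta_def)
  have c2: "card (ball1 X d w (1 / tau ^ k / 3)) \<le> card (ball1 X d ?u (1 / tau ^ k / 3))"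
    if w: "w \<in> ball1 X d ?v (6 / tau ^ Suc k)" for w
  proof -
    have wX: "w \<in> X" and dw: "d w ?v \<le> 6 * eta (Suc k)" using w by (auto simp: ball1_iff eta_def)
    have "d w z \<le> d w ?v + d ?v z" using tri wX vX assms by blast
    also have "d ?v z \<le> d ?v z' + d z' z" using tri vX assms by blast
    finally have "d w z \<le> 5/4 * eta k" using dw Pv dz dsym[OF assms(2,3)] e eta_pos[of k] by simp
    hence "mu k w \<le> mu k ?u" using Pu wX by blast
    thus ?thesis by (simp add: mu_def eta_def)
  qed
  show ?thesis unfolding arcA_def using Pu Pv c1 c2 by blast
qed

end



primrec blk :: "('a\<Rightarrow>'a\<Rightarrow>real) \<Rightarrow> (nat\<Rightarrow>'a) \<Rightarrow> real \<Rightarrow> nat \<Rightarrow> nat" where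
  "blk d x r 0 = 1"
| "blk d x r (Suc i) = (if d (x (Suc i)) (x (blk d x r i)) \<le> r then blk d x r i else Suc i)"

locale walk = setting +
  fixes m :: nat and x :: "nat \<Rightarrow> 'a"
  assumes m1: "m \<ge> 1" and xX: "\<And>i. i \<in> {1..m} \<Longrightarrow> x i \<in> X"
begin

definition b where "b k i = blk d x (eta k / 2) i"
definition z where "z k i = x (b k i)"
definition gam where "gam i = map (\<lambda>k. F k (z k i)) [0..<Suc K]"
definition chg where "chg k i \<longleftrightarrow> \<not> d (x (Suc i)) (x (b k i)) \<le> eta k / 2"

lemma b_Suc: "b k (Suc i) = (if chg k i then Suc i else b k i)"
  by (simp add: b_def chg_def)

lemma b0: "b k 0 = 1" by (simp add: b_def)

lemma b_bounds: "1 \<le> b k i \<and> b k i \<le> max i 1"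
  by (induction i) (auto simp: b_Suc b0)

lemma b_close: assumes "1 \<le> i" "i \<le> m" shows "d (x i) (z k i) \<le> eta k / 2"
proof -
  obtain j where j: "i = Suc j" using assms by (cases i) auto
  have "x i \<in> X" using xX assms by simp
  thus ?thesis using j eta_pos[of k] d0 by (auto simp: z_def b_Suc chg_def)
qed

lemma zX: assumes "1 \<le> i" "i \<le> m" shows "z k i \<in> X"
  using b_bounds[of k i] assms xX unfolding z_def by auto

lemma zK: assumes "1 \<le> i" "i \<le> m" shows "z K i = x i"
proof -
  have "d (x i) (z K i) \<le> 3 * eta K" using b_close[OF assms, of K] eta_pos[of K] by linarith
  thus ?thesis using closeK[of "x i" "z K i"] zX[OF assms] xX[of i] assms by auto
qed

lemma gam_nth: "k \<le> K \<Longrightarrow> gam i ! k = F k (z k i)"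
  unfolding gam_def by (simp del: upt_Suc)

lemma gam_len: "length (gam i) = Suc K" by (simp add: gam_def)

lemma gam_path: assumes "1 \<le> i" "i \<le> m" shows "dpath X d U (gam i) \<and> last (gam i) = x i"
proof -
  have "dpath X d U (gam i)" unfolding dpath_def K_def[symmetric]
  proof (intro conjI allI impI)
    show "length (gam i) = Suc K" by (rule gam_len)
    show "gam i ! 0 \<in> U 0" using gam_nth[of 0 i] F_prop[of 0 "z 0 i"] zX[OF assms] by simp
    fix k assume "k < K"
    thus "arcA X d U k (gam i ! k) (gam i ! Suc k)"
      using gam_nth[of k i] gam_nth[of "Suc k" i] arc[of k "z k i" "z (Suc k) i" "x i"]
        zX[OF assms] xX assms b_close[OF assms] by simp
  qed
  moreover have "last (gam i) = gam i ! K"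
  proof -
    have "gam i \<noteq> []" using gam_len[of i] by auto
    thus ?thesis using gam_len[of i] by (simp add: last_conv_nth)
  qed
  hence "last (gam i) = x i" using gam_nth[of K i] zK[OF assms] FK[of "x i"] xX[of i] assms by simp
  ultimately show ?thesis by simp
qed

lemma aw_le10: "arc_weight j \<le> 10"
proof -
  have "10 / (12::real)^j \<le> 10 / 1" by (rule divide_left_mono) auto
  thus ?thesis by (simp add: arc_weight_def tau_def)
qed

lemma cost: assumes "1 \<le> i" "Suc i \<le> m"
  shows "dist_hat (gam i) (gam (Suc i)) \<le> 120 * (\<Sum>k\<le>K. if chg k i then eta k else 0)"
proof -
  let ?f = "\<lambda>k. if chg k i then eta k else 0"
  have fnn: "\<And>k. ?f k \<ge> 0" using eta_pos by (simp add: less_imp_le)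
  have snn: "0 \<le> (\<Sum>k\<le>K. ?f k)" using fnn by (simp add: sum_nonneg)
  have fle: "k \<le> K \<Longrightarrow> ?f k \<le> (\<Sum>k\<le>K. ?f k)" for k
    by (rule member_le_sum) (use fnn in auto)
  show ?thesis
  proof (cases "gam i = gam (Suc i)")
    case True thus ?thesis using snn by (simp add: dist_hat_def)
  next
    case False
    have ex: "\<exists>k\<le>K. chg k i"
    proof (rule ccontr)
      assume "\<not> ?thesis"
      hence "\<And>k. k \<le> K \<Longrightarrow> gam i ! k = gam (Suc i) ! k"
        using gam_nth by (simp add: z_def b_Suc)
      hence "gam i = gam (Suc i)" using gam_len by (intro nth_equalityI) auto
      thus False using False by simp
    qed
    define j where "j = (LEAST k. k \<le> K \<and> chg k i)"
    have jP: "j \<le> K \<and> chg k i" if "k = j" for k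
      unfolding that j_def using ex by (rule LeastI_ex)
    have jmin: "\<And>k. k < j \<Longrightarrow> \<not> chg k i"
      using not_less_Least jP j_def by (metis (no_types, lifting) dual_order.strict_trans1 less_imp_le_nat)
    have eqbelow: "\<And>k. k < j \<Longrightarrow> gam i ! k = gam (Suc i) ! k"
      using jmin jP gam_nth by (simp add: z_def b_Suc)
    have dh: "dist_hat (gam i) (gam (Suc i)) = arc_weight (LEAST j. gam i ! Suc j \<noteq> gam (Suc i) ! Suc j)"
      using False by (simp add: dist_hat_def Let_def)
    show ?thesis
    proof (cases j)
      case 0
      have "?f j = 1" using jP 0 by (simp add: eta_def)
      hence "1 \<le> (\<Sum>k\<le>K. ?f k)" using fle jP by force
      thus ?thesis using dh aw_le10 by (smt (verit))
    next
      case (Suc j')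
      obtain idx where idx: "idx < Suc K" "gam i ! idx \<noteq> gam (Suc i) ! idx"
        using False gam_len by (metis nth_equalityI)
      have "idx \<noteq> 0"
      proof
        assume "idx = 0" thus False using eqbelow[of 0] idx Suc by simp
      qed
      then obtain q where q: "idx = Suc q" by (cases idx) auto
      define L where "L = (LEAST j. gam i ! Suc j \<noteq> gam (Suc i) ! Suc j)"
      have LP: "gam i ! Suc L \<noteq> gam (Suc i) ! Suc L" unfolding L_def
        by (rule LeastI[of _ q]) (use idx q in simp)
      have "\<not> Suc L < j" using LP eqbelow by blast
      hence "j' \<le> L" using Suc by simp
      hence "arc_weight L \<le> arc_weight j'" by (simp add: arc_weight_def tau_def divide_left_mono)
      also have "arc_weight j' = 120 * eta j" using Suc by (simp add: arc_weight_def eta_def tau_def)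
      also have "eta j = ?f j" using jP by simp
      also have "\<dots> \<le> (\<Sum>k\<le>K. ?f k)" using fle jP by blast
      finally show ?thesis using dh L_def by simp
    qed
  qed
qed

end


context setting begin

lemma walk_bound:
  fixes y :: "nat \<Rightarrow> 'a" and \<theta> :: real
  assumes th: "\<theta> \<ge> 0"
  shows "a \<le> b \<Longrightarrow> (\<forall>t\<in>{a..b}. y t \<in> X) \<Longrightarrow> d (y a) (y b) \<le>
     (\<Sum>t\<in>{a..<b}. if \<theta> \<le> d (y t) (y (Suc t)) then d (y t) (y (Suc t)) else 0)
     + (real (card (y ` {a..b})) - 1) * \<theta>"
proof (induction "b - a" arbitrary: a rule: less_induct)
  case less
  let ?g = "\<lambda>t. if \<theta> \<le> d (y t) (y (Suc t)) then d (y t) (y (Suc t)) else 0"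
  have gnn: "\<And>t. t \<in> {a..<b} \<Longrightarrow> ?g t \<ge> 0" using less.prems dnn th by auto
  have cpos: "card (y ` {a..b}) \<ge> 1" using less.prems by (simp add: Suc_le_eq card_gt_0_iff)
  define Q where "Q = {t\<in>{a..b}. y t = y a}"
  have Qf: "finite Q" and aQ: "a \<in> Q" using less.prems unfolding Q_def by auto
  define ts where "ts = Max Q"
  have tsQ: "ts \<in> Q" unfolding ts_def using Qf aQ by (intro Max_in) auto
  have tsmax: "\<And>t. t \<in> Q \<Longrightarrow> t \<le> ts" unfolding ts_def using Qf by simp
  have ts: "a \<le> ts" "ts \<le> b" "y ts = y a" using tsQ unfolding Q_def by auto
  show ?case
  proof (cases "ts = b")
    case True
    hence "d (y a) (y b) = 0" using ts d0 less.prems by auto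
    moreover have "0 \<le> (\<Sum>t\<in>{a..<b}. ?g t)" using gnn by (intro sum_nonneg) auto
    moreover have "0 \<le> (real (card (y ` {a..b})) - 1) * \<theta>" using cpos th by simp
    ultimately show ?thesis by linarith
  next
    case False
    hence tsb: "ts < b" using ts by simp
    define a' where "a' = Suc ts"
    have IH: "d (y a') (y b) \<le> (\<Sum>t\<in>{a'..<b}. ?g t) + (real (card (y ` {a'..b})) - 1) * \<theta>"
    proof (rule less.hyps)
      show "b - a' < b - a" using tsb ts unfolding a'_def by simp
      show "a' \<le> b" using tsb unfolding a'_def by simp
      show "\<forall>t\<in>{a'..b}. y t \<in> X" using less.prems ts unfolding a'_def by simp
    qed
    have sub: "y ` {a'..b} \<subseteq> y ` {a..b} - {y a}"
    proof
      fix v assume "v \<in> y ` {a'..b}"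
      then obtain t where t: "t \<in> {a'..b}" "v = y t" by auto
      have "y t \<noteq> y a"
      proof
        assume "y t = y a"
        hence "t \<in> Q" using t ts unfolding Q_def a'_def by auto
        from tsmax[OF this] show False using t unfolding a'_def by simp
      qed
      thus "v \<in> y ` {a..b} - {y a}" using t ts unfolding a'_def by auto
    qed
    have "card (y ` {a'..b}) \<le> card (y ` {a..b} - {y a})" using sub by (intro card_mono) auto
    also have "\<dots> = card (y ` {a..b}) - 1" using less.prems by (simp add: card_Diff_singleton)
    finally have cle: "real (card (y ` {a'..b})) \<le> real (card (y ` {a..b})) - 1" using cpos by linarith
    have yX: "y ts \<in> X" "y a' \<in> X" "y b \<in> X" using less.prems ts tsb unfolding a'_def by auto
    have dts: "d (y ts) (y a') \<le> ?g ts + \<theta>" using th dnn[OF yX(1,2)] unfolding a'_def by auto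
    have "d (y a) (y b) = d (y ts) (y b)" using ts by simp
    also have "\<dots> \<le> d (y ts) (y a') + d (y a') (y b)" using tri yX by blast
    finally have A: "d (y a) (y b) \<le> d (y ts) (y a') + d (y a') (y b)" .
    have B: "(real (card (y ` {a'..b})) - 1) * \<theta> \<le> ((real (card (y ` {a..b})) - 1) - 1) * \<theta>"
      using cle th by (intro mult_right_mono) auto
    have C: "?g ts + (\<Sum>t\<in>{a'..<b}. ?g t) = (\<Sum>t\<in>insert ts {a'..<b}. ?g t)"
      unfolding a'_def by (subst sum.insert) auto
    have D: "(\<Sum>t\<in>insert ts {a'..<b}. ?g t) \<le> (\<Sum>t\<in>{a..<b}. ?g t)"
      using gnn ts tsb unfolding a'_def by (intro sum_mono2) auto
    have E: "((real (card (y ` {a..b})) - 1) - 1) * \<theta> = (real (card (y ` {a..b})) - 1) * \<theta> - \<theta>"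
      by (simp add: algebra_simps)
    show ?thesis using A B C D E IH dts by linarith
  qed
qed

end


context walk begin

definition dl where "dl t = d (x t) (x (Suc t))"
definition nn where "nn = real (card X)"
definition w where "w k t = (if eta k / (4 * nn) \<le> dl t then min (dl t) (eta k) else 0)"

lemma nn2: "nn \<ge> 2" using cardX unfolding nn_def by simp

lemma w_nn: "w k t \<ge> 0"
proof -
  have "eta k / (4 * nn) > 0" using eta_pos[of k] nn2 by simp
  thus ?thesis unfolding w_def using eta_pos[of k] by auto
qed

lemma seg: assumes "1 \<le> i" "Suc i \<le> m" "chg k i"
  shows "eta k \<le> 4 * (\<Sum>t\<in>{b k i..<Suc i}. w k t)"
proof -
  let ?a = "b k i" and ?th = "eta k / (4 * nn)"
  have a: "1 \<le> ?a" "?a \<le> i" using b_bounds[of k i] assms by auto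
  have th: "?th \<ge> 0" using eta_pos[of k] nn2 by simp
  have inX: "\<forall>t\<in>{?a..Suc i}. x t \<in> X" using a assms xX by auto
  have wb: "d (x ?a) (x (Suc i)) \<le>
     (\<Sum>t\<in>{?a..<Suc i}. if ?th \<le> d (x t) (x (Suc t)) then d (x t) (x (Suc t)) else 0)
     + (real (card (x ` {?a..Suc i})) - 1) * ?th"
    using walk_bound[OF th, of ?a "Suc i" x] a inX by simp
  have "card (x ` {?a..Suc i}) \<le> card X" using inX finX by (intro card_mono) auto
  hence "real (card (x ` {?a..Suc i})) \<le> nn" unfolding nn_def by simp
  hence "(real (card (x ` {?a..Suc i})) - 1) * ?th \<le> nn * ?th" using th by (intro mult_right_mono) auto
  also have "nn * ?th = eta k / 4" using nn2 by simp
  finally have c: "(real (card (x ` {?a..Suc i})) - 1) * ?th \<le> eta k / 4" .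
  have "eta k / 2 < d (x (Suc i)) (x ?a)" using assms(3) unfolding chg_def by simp
  hence "eta k / 2 < d (x ?a) (x (Suc i))" using dsym inX a by auto
  hence long: "eta k / 4 < (\<Sum>t\<in>{?a..<Suc i}. if ?th \<le> dl t then dl t else 0)"
    using wb c unfolding dl_def by linarith
  show ?thesis
  proof (cases "\<exists>t\<in>{?a..<Suc i}. ?th \<le> dl t \<and> eta k \<le> dl t")
    case True
    then obtain t where t: "t \<in> {?a..<Suc i}" "?th \<le> dl t" "eta k \<le> dl t" by blast
    have "w k t = eta k" using t unfolding w_def by simp
    moreover have "w k t \<le> (\<Sum>t\<in>{?a..<Suc i}. w k t)" using t w_nn by (intro member_le_sum) auto
    ultimately show ?thesis using eta_pos[of k] by linarith
  next
    case False
    hence "\<And>t. t \<in> {?a..<Suc i} \<Longrightarrow> w k t = (if ?th \<le> dl t then dl t else 0)"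
      unfolding w_def by auto
    hence "(\<Sum>t\<in>{?a..<Suc i}. w k t) = (\<Sum>t\<in>{?a..<Suc i}. if ?th \<le> dl t then dl t else 0)"
      by (intro sum.cong) auto
    thus ?thesis using long by linarith
  qed
qed

lemma inv: "1 \<le> i \<Longrightarrow> i \<le> m \<Longrightarrow>
   (\<Sum>t\<in>{1..<i}. if chg k t then eta k else 0) \<le> 4 * (\<Sum>t\<in>{1..<b k i}. w k t)"
proof (induction i)
  case 0 thus ?case by simp
next
  case (Suc i)
  show ?case
  proof (cases "i = 0")
    case True
    have "b k 1 = 1" using b_bounds[of k 1] by simp
    thus ?thesis using True by simp
  next
    case False
    hence i1: "1 \<le> i" by simp
    have IH: "(\<Sum>t\<in>{1..<i}. if chg k t then eta k else 0) \<le> 4 * (\<Sum>t\<in>{1..<b k i}. w k t)"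
      using Suc i1 by simp
    have split: "(\<Sum>t\<in>{1..<Suc i}. if chg k t then eta k else 0) =
        (\<Sum>t\<in>{1..<i}. if chg k t then eta k else 0) + (if chg k i then eta k else 0)"
      using i1 by (simp add: sum.atLeastLessThan_Suc)
    show ?thesis
    proof (cases "chg k i")
      case True
      have bs: "b k (Suc i) = Suc i" using True by (simp add: b_Suc)
      have bi: "1 \<le> b k i" "b k i \<le> i" using b_bounds[of k i] i1 by auto
      have "(\<Sum>t\<in>{1..<b k i}. w k t) + (\<Sum>t\<in>{b k i..<Suc i}. w k t) = (\<Sum>t\<in>{1..<Suc i}. w k t)"
        using bi by (intro sum.atLeastLessThan_concat) auto
      moreover have "eta k \<le> 4 * (\<Sum>t\<in>{b k i..<Suc i}. w k t)"
        using seg[OF i1 _ True] Suc.prems by simp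
      ultimately show ?thesis using IH split bs True by simp
    next
      case False
      have bs: "b k (Suc i) = b k i" using False by (simp add: b_Suc)
      show ?thesis using IH split bs False by simp
    qed
  qed
qed

lemma total: "(\<Sum>i=1..m-1. dist_hat (gam i) (gam (Suc i))) \<le> 480 * (\<Sum>t\<in>{1..<m}. \<Sum>k\<le>K. w k t)"
proof -
  have eq: "{1..m-1} = {1..<m}" using m1 by auto
  have "(\<Sum>i\<in>{1..<m}. dist_hat (gam i) (gam (Suc i))) \<le>
        (\<Sum>i\<in>{1..<m}. 120 * (\<Sum>k\<le>K. if chg k i then eta k else 0))"
    by (intro sum_mono cost) auto
  also have "\<dots> = 120 * (\<Sum>k\<le>K. \<Sum>i\<in>{1..<m}. if chg k i then eta k else 0)"
    by (simp add: sum_distrib_left[symmetric] sum.swap[of _ "{..K}"])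
  also have "\<dots> \<le> 120 * (\<Sum>k\<le>K. 4 * (\<Sum>t\<in>{1..<m}. w k t))"
  proof -
    have "(\<Sum>i\<in>{1..<m}. if chg k i then eta k else 0) \<le> 4 * (\<Sum>t\<in>{1..<m}. w k t)" for k
    proof -
      have "(\<Sum>t\<in>{1..<b k m}. w k t) \<le> (\<Sum>t\<in>{1..<m}. w k t)"
        using b_bounds[of k m] m1 w_nn by (intro sum_mono2) auto
      thus ?thesis using inv[of m k] m1 by simp
    qed
    thus ?thesis by (intro mult_left_mono sum_mono) auto
  qed
  also have "\<dots> = 480 * (\<Sum>t\<in>{1..<m}. \<Sum>k\<le>K. w k t)"
    by (simp add: sum_distrib_left[symmetric] sum.swap[of _ "{..K}"])
  finally show ?thesis using eq by simp
qed

end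



lemma ln2_ge: "ln 2 \<ge> (1/2::real)" by (smt (verit) ln_add1_ge)

lemma eta_pow: "eta k = (1/12) ^ k" by (simp add: eta_def tau_def power_one_over)

lemma eta_gap: "j + L \<le> k \<Longrightarrow> eta k \<le> eta j / 12 ^ L"
proof -
  assume "j + L \<le> k"
  hence "(12::real) ^ (j + L) \<le> 12 ^ k" by (intro power_increasing) auto
  hence "(12::real) ^ j * 12 ^ L \<le> 12 ^ k" by (simp add: power_add)
  hence "1 / (12::real) ^ k \<le> 1 / (12 ^ j * 12 ^ L)" by (intro divide_left_mono) auto
  thus "eta k \<le> eta j / 12 ^ L" by (simp add: eta_def tau_def)
qed

lemma eta_anti: "j \<le> k \<Longrightarrow> eta k \<le> eta j"
proof -
  assume "j \<le> k"
  hence "eta k \<le> eta j / 12 ^ (k - j)" using eta_gap[of j "k - j" k] by simp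
  also have "\<dots> \<le> eta j / 1" using eta_pos[of j] by (intro divide_left_mono) auto
  finally show ?thesis by simp
qed

lemma levelsum:
  fixes \<delta> N :: real
  assumes N: "N \<ge> 2" and dl: "\<delta> \<ge> 0"
  shows "(\<Sum>k\<le>K. if eta k / (4 * N) \<le> \<delta> then min \<delta> (eta k) else 0) \<le> 11 * ln N * \<delta>"
proof (cases "\<delta> = 0")
  case True
  have "\<And>k. \<not> eta k / (4 * N) \<le> 0" using eta_pos N by (simp add: not_le)
  thus ?thesis using True by simp
next
  case False
  hence dp: "\<delta> > 0" using dl by simp
  define L where "L = nat \<lceil>log 2 N\<rceil> + 2"
  have NL: "4 * N \<le> 12 ^ L"
  proof -
    have "N = 2 powr (log 2 N)" using N by simp
    also have "\<dots> \<le> 2 powr (real (nat \<lceil>log 2 N\<rceil>))"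
    proof (intro powr_mono)
      have "log 2 N \<ge> 0" using N by simp
      hence "real (nat \<lceil>log 2 N\<rceil>) = real_of_int \<lceil>log 2 N\<rceil>" by simp
      thus "log 2 N \<le> real (nat \<lceil>log 2 N\<rceil>)" by linarith
    qed auto
    also have "\<dots> = 2 ^ (nat \<lceil>log 2 N\<rceil>)" by (simp add: powr_realpow)
    finally have "4 * N \<le> 4 * 2 ^ (nat \<lceil>log 2 N\<rceil>)" by simp
    also have "\<dots> = (2::real) ^ L" unfolding L_def by (simp add: power_add)
    also have "\<dots> \<le> 12 ^ L" by (intro power_mono) auto
    finally show ?thesis .
  qed
  have Lb: "real L \<le> ln N / ln 2 + 3"
  proof -
    have "log 2 N \<ge> 0" using N by simp
    hence "real (nat \<lceil>log 2 N\<rceil>) \<le> log 2 N + 1" by linarith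
    thus ?thesis unfolding L_def log_def by simp
  qed
  define A where "A k = (if \<delta> < eta k \<and> eta k \<le> 4 * N * \<delta> then 1 else (0::real))" for k
  define B where "B k = (if eta k \<le> \<delta> then eta k else 0)" for k
  have tm: "(if eta k / (4 * N) \<le> \<delta> then min \<delta> (eta k) else 0) \<le> \<delta> * A k + B k" for k
  proof -
    have e: "eta k / (4 * N) \<le> \<delta> \<longleftrightarrow> eta k \<le> 4 * N * \<delta>" using N by (simp add: divide_le_eq mult.commute)
    show ?thesis using e eta_pos[of k] dp unfolding A_def B_def by auto
  qed
  define S where "S = {k\<in>{..K}. \<delta> < eta k \<and> eta k \<le> 4 * N * \<delta>}"
  have sumA: "(\<Sum>k\<le>K. A k) = real (card S)"
  proof -
    have "(\<Sum>k\<le>K. A k) = (\<Sum>k\<in>S. 1)" unfolding A_def S_def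
      by (simp add: sum.If_cases Int_def)
    thus ?thesis by simp
  qed
  have cardS: "card S \<le> L"
  proof (cases "S = {}")
    case True thus ?thesis by simp
  next
    case False
    have Sf: "finite S" unfolding S_def by simp
    define k0 where "k0 = Min S"
    have k0S: "k0 \<in> S" unfolding k0_def using Sf False by simp
    have "S \<subseteq> {k0..<k0 + L}"
    proof
      fix k assume kS: "k \<in> S"
      have "k0 \<le> k" unfolding k0_def using Sf kS by simp
      moreover have "k < k0 + L"
      proof (rule ccontr)
        assume "\<not> k < k0 + L"
        hence "eta k \<le> eta k0 / 12 ^ L" by (intro eta_gap) simp
        also have "\<dots> \<le> 4 * N * \<delta> / 12 ^ L" using k0S unfolding S_def by (intro divide_right_mono) auto
        also have "\<dots> \<le> \<delta>"
        proof -
          have "4 * N * \<delta> \<le> 12 ^ L * \<delta>" using NL dp by (intro mult_right_mono) auto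
          thus ?thesis by (simp add: divide_le_eq mult.commute)
        qed
        finally show False using kS unfolding S_def by simp
      qed
      ultimately show "k \<in> {k0..<k0 + L}" by simp
    qed
    hence "card S \<le> card {k0..<k0 + L}" by (intro card_mono) auto
    thus ?thesis by simp
  qed
  define T where "T = {k\<in>{..K}. eta k \<le> \<delta>}"
  have sumB: "(\<Sum>k\<le>K. B k) \<le> 12 / 11 * \<delta>"
  proof (cases "T = {}")
    case True
    hence "\<And>k. k \<le> K \<Longrightarrow> B k = 0" unfolding T_def B_def by auto
    thus ?thesis using dp by simp
  next
    case False
    have Tf: "finite T" unfolding T_def by simp
    define k2 where "k2 = Min T"
    have k2T: "k2 \<in> T" unfolding k2_def using Tf False by simp
    have "(\<Sum>k\<le>K. B k) \<le> (\<Sum>k\<in>{k2..K}. eta k)"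
    proof -
      have "(\<Sum>k\<le>K. B k) = (\<Sum>k\<in>{k2..K}. B k)"
      proof (rule sum.mono_neutral_right)
        show "finite {..K}" by simp
        show "{k2..K} \<subseteq> {..K}" by auto
        show "\<forall>k\<in>{..K} - {k2..K}. B k = 0"
        proof
          fix k assume k: "k \<in> {..K} - {k2..K}"
          hence "k < k2" by auto
          hence "k \<notin> T" unfolding k2_def using Tf by (meson Min_le not_le)
          thus "B k = 0" using k unfolding T_def B_def by auto
        qed
      qed
      also have "\<dots> \<le> (\<Sum>k\<in>{k2..K}. eta k)" unfolding B_def using eta_pos
        by (intro sum_mono) (auto simp: less_imp_le)
      finally show ?thesis .
    qed
    also have "\<dots> = (\<Sum>k=k2..K. (1/12::real) ^ k)" by (simp add: eta_pow)
    also have "\<dots> \<le> 12/11 * (1/12) ^ k2"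
    proof -
      have "k2 \<le> K" using k2T unfolding T_def by simp
      hence "(\<Sum>k=k2..K. (1/12::real) ^ k) = ((1/12) ^ k2 - (1/12) ^ Suc K) / (1 - 1/12)"
        by (subst sum_gp) auto
      also have "\<dots> \<le> (1/12) ^ k2 / (1 - 1/12)" by (intro divide_right_mono) auto
      finally show ?thesis by simp
    qed
    also have "\<dots> = 12/11 * eta k2" by (simp add: eta_pow)
    also have "\<dots> \<le> 12/11 * \<delta>" using k2T unfolding T_def by simp
    finally show ?thesis .
  qed
  have "(\<Sum>k\<le>K. if eta k / (4 * N) \<le> \<delta> then min \<delta> (eta k) else 0) \<le> (\<Sum>k\<le>K. \<delta> * A k + B k)"
    by (intro sum_mono tm)
  also have "\<dots> = \<delta> * (\<Sum>k\<le>K. A k) + (\<Sum>k\<le>K. B k)" by (simp add: sum.distrib sum_distrib_left)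
  also have "\<dots> \<le> \<delta> * (ln N / ln 2 + 3) + 12/11 * \<delta>"
    using sumA cardS Lb sumB dp by (smt (verit, best) mult_left_mono of_nat_mono)
  also have "\<dots> \<le> 11 * ln N * \<delta>"
  proof -
    have l2: "ln 2 \<ge> (1/2::real)" by (rule ln2_ge)
    have lN: "ln N \<ge> ln 2" using N by simp
    have q: "ln N / ln 2 \<ge> 1" using lN l2 by simp
    have q2: "ln N / ln 2 \<le> 2 * ln N" using l2 lN by (simp add: divide_le_eq)
    have "ln N / ln 2 + 3 + 12/11 \<le> 11 * ln N" using q q2 by linarith
    thus ?thesis using dp by (smt (verit) mult_left_mono mult.commute distrib_left)
  qed
  finally show ?thesis .
qed




context walk begin
lemma main: "\<exists>\<gamma>::nat \<Rightarrow> 'a list.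
           (\<forall>i\<in>{1..m}. dpath X d U (\<gamma> i) \<and> last (\<gamma> i) = x i) \<and>
           (\<Sum>i=1..m-1. dist_hat (\<gamma> i) (\<gamma> (Suc i)))
             \<le> 5280 * ln (real (card X)) * (\<Sum>i=1..m-1. d (x i) (x (Suc i)))"
proof (rule exI[of _ gam], rule conjI)
  show "\<forall>i\<in>{1..m}. dpath X d U (gam i) \<and> last (gam i) = x i" using gam_path by simp
next
  have eq: "{1..m-1} = {1..<m}" using m1 by auto
  have "(\<Sum>i=1..m-1. dist_hat (gam i) (gam (Suc i))) \<le> 480 * (\<Sum>t\<in>{1..<m}. \<Sum>k\<le>K. w k t)"
    by (rule total)
  also have "\<dots> \<le> 480 * (\<Sum>t\<in>{1..<m}. 11 * ln nn * dl t)"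
  proof -
    have "(\<Sum>k\<le>K. w k t) \<le> 11 * ln nn * dl t" if t: "t \<in> {1..<m}" for t
    proof -
      have "dl t \<ge> 0" unfolding dl_def using t xX by (intro dnn) auto
      thus ?thesis unfolding w_def using levelsum[OF nn2] by blast
    qed
    thus ?thesis by (intro mult_left_mono sum_mono) auto
  qed
  also have "\<dots> = 5280 * ln (real (card X)) * (\<Sum>i=1..m-1. d (x i) (x (Suc i)))"
    unfolding eq nn_def dl_def by (simp add: sum_distrib_left mult.assoc)
  finally show "(\<Sum>i=1..m-1. dist_hat (gam i) (gam (Suc i)))
             \<le> 5280 * ln (real (card X)) * (\<Sum>i=1..m-1. d (x i) (x (Suc i)))" .
qed
end

theorem corollary3p10:
  shows "\<exists>C::real. \<forall>(X::'a set) d U.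
     fin_metric X d \<and> card X \<ge> 2 \<and> diam X d = 1 \<and> nets_ok X d U \<longrightarrow>
     (\<forall>m::nat. \<forall>x::nat \<Rightarrow> 'a. m \<ge> 1 \<and> (\<forall>i\<in>{1..m}. x i \<in> X) \<longrightarrow>
        (\<exists>\<gamma>::nat \<Rightarrow> 'a list.
           (\<forall>i\<in>{1..m}. dpath X d U (\<gamma> i) \<and> last (\<gamma> i) = x i) \<and>
           (\<Sum>i=1..m-1. dist_hat (\<gamma> i) (\<gamma> (Suc i)))
             \<le> C * ln (real (card X)) * (\<Sum>i=1..m-1. d (x i) (x (Suc i)))))"
proof (intro exI[of _ 5280] allI impI)
  fix X :: "'a set" and d U m and x :: "nat \<Rightarrow> 'a"
  assume H: "fin_metric X d \<and> card X \<ge> 2 \<and> diam X d = 1 \<and> nets_ok X d U"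
    and W: "m \<ge> 1 \<and> (\<forall>i\<in>{1..m}. x i \<in> X)"
  interpret walk X d U m x
    using H W by unfold_locales auto
  show "\<exists>\<gamma>::nat \<Rightarrow> 'a list.
           (\<forall>i\<in>{1..m}. dpath X d U (\<gamma> i) \<and> last (\<gamma> i) = x i) \<and>
           (\<Sum>i=1..m-1. dist_hat (\<gamma> i) (\<gamma> (Suc i)))
             \<le> 5280 * ln (real (card X)) * (\<Sum>i=1..m-1. d (x i) (x (Suc i)))"
    by (rule main)
qed


end
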